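(* Let $(S,\cdot)$ be a discrete semigroup, let $\mathcal{F}$ be a filter on $S$ such that $\overline{\mathcal{F}}$ is a subsemigroup of $\beta S$, and let $(X,\langle T_s\rangle_{s\in S})$ be a dynamical system. Then $x,y\in X$ are $\mathcal{F}$-proximal if and only if there is some $p\in\overline{\mathcal{F}}$ such that $T_p(x)=T_p(y)$.
   Context: $\beta S$ is the Stone–Čech compactification of $S$ (ultrafilters on $S$) with the extended operation making it a compact right topological semigroup ($A\in pq$ iff $\{x\in S:x^{-1}A\in q\}\in p$). $\overline{\mathcal{F}}=\bigcap_{F\in\mathcal{F}}\overline{F}$ is the set of ultrafilters containing $\mathcal{F}$. A dynamical system $(X,\langle T_s\rangle_{s\in S})$: $X$ compact Hausdorff, each $T_s:X\to X$ continuous, $T_s\circ T_t=T_{st}$. For $p\in\beta S$, $T_p:X\to X$ is defined by $T_p(x)=p\text{-}\lim_{s\in S}T_s(x)$ (equivalently $T_p=\tilde\theta(p)$, where $\tilde\theta$ is the continuous extension to $\beta S$ of $s\mapsto T_s\in X^X$); one has $T_p\circ T_q=T_{pq}$. Points $x,y\in X$ are $\mathcal{F}$-proximal if for every neighbourhood $U$ of the diagonal in $X\times X$ and every $F\in\mathcal{F}$ there is $s\in F$ with $(T_s(x),T_s(y))\in U$. *)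

theory Defs
  imports "HOL-Analysis.Analysis"
begin

text \<open>Ultrafilters on a type (points of the Stone-Cech compactification beta S).\<close>
definition is_ultrafilter :: "'a filter \<Rightarrow> bool" where
  "is_ultrafilter p \<longleftrightarrow> p \<noteq> bot \<and>
     (\<forall>A. eventually (\<lambda>s. s \<in> A) p \<or> eventually (\<lambda>s. s \<notin> A) p)"

definition beta_mult :: "'a::semigroup_mult filter \<Rightarrow> 'a filter \<Rightarrow> 'a filter" where
  "beta_mult p q = Abs_filter (\<lambda>P. eventually (\<lambda>x. eventually (\<lambda>y. P (x * y)) q) p)"

lemma eventually_beta_mult:
  "eventually P (beta_mult p q) \<longleftrightarrow> eventually (\<lambda>x. eventually (\<lambda>y. P (x * y)) q) p"
proof -
  have "is_filter (\<lambda>P. eventually (\<lambda>x. eventually (\<lambda>y. P (x * y)) q) p)"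
  proof
    show "eventually (\<lambda>x. eventually (\<lambda>y. True) q) p" by simp
  next
    fix P Q
    assume "eventually (\<lambda>x. eventually (\<lambda>y. P (x * y)) q) p"
      "eventually (\<lambda>x. eventually (\<lambda>y. Q (x * y)) q) p"
    then show "eventually (\<lambda>x. eventually (\<lambda>y. P (x * y) \<and> Q (x * y)) q) p"
      by (auto elim: eventually_elim2 intro: eventually_conj)
  next
    fix P Q :: "'a \<Rightarrow> bool"
    assume PQ: "\<forall>x. P x \<longrightarrow> Q x"
      and ev: "eventually (\<lambda>x. eventually (\<lambda>y. P (x * y)) q) p"
    have "\<And>x. eventually (\<lambda>y. P (x * y)) q \<Longrightarrow> eventually (\<lambda>y. Q (x * y)) q"
      using PQ by (auto elim: eventually_mono)
    then show "eventually (\<lambda>x. eventually (\<lambda>y. Q (x * y)) q) p"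
      using ev by (auto elim: eventually_mono)
  qed
  then show ?thesis unfolding beta_mult_def by (simp add: eventually_Abs_filter)
qed

text \<open>closure of F in beta S: the ultrafilters containing F (p contains F iff p \<le> F).\<close>
definition filter_closure :: "'a filter \<Rightarrow> 'a filter set" where
  "filter_closure F = {p. is_ultrafilter p \<and> p \<le> F}"

definition dynamical_system :: "('a::semigroup_mult \<Rightarrow> 'b::t2_space \<Rightarrow> 'b) \<Rightarrow> bool" where
  "dynamical_system T \<longleftrightarrow> compact (UNIV :: 'b set) \<and> (\<forall>s. continuous_on UNIV (T s)) \<and>
     (\<forall>s t. T s \<circ> T t = T (s * t))"

definition T_beta :: "('a \<Rightarrow> 'b::t2_space \<Rightarrow> 'b) \<Rightarrow> 'a filter \<Rightarrow> 'b \<Rightarrow> 'b" where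
  "T_beta T p x = Lim p (\<lambda>s. T s x)"

definition F_proximal :: "'a filter \<Rightarrow> ('a \<Rightarrow> 'b::topological_space \<Rightarrow> 'b) \<Rightarrow> 'b \<Rightarrow> 'b \<Rightarrow> bool" where
  "F_proximal F T x y \<longleftrightarrow>
     (\<forall>U. (\<exists>V. open V \<and> (\<forall>z. (z, z) \<in> V) \<and> V \<subseteq> U) \<longrightarrow>
        (\<forall>A. eventually (\<lambda>s. s \<in> A) F \<longrightarrow> (\<exists>s\<in>A. (T s x, T s y) \<in> U)))"

end

theory Submission
  imports Defs
begin

lemma sep_point_compact:
  fixes K :: "'c::t2_space set"
  assumes K: "compact K" and a: "a \<notin> K"
  shows "\<exists>Oa P. open Oa \<and> open P \<and> a \<in> Oa \<and> K \<subseteq> P \<and> Oa \<inter> P = {}"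
proof -
  define C where "C = {u. open u \<and> (\<exists>v. open v \<and> a \<in> v \<and> u \<inter> v = {})}"
  have "K \<subseteq> \<Union>C"
  proof
    fix k assume "k \<in> K"
    with a have "k \<noteq> a" by auto
    from hausdorff[OF this] obtain u v where "open u" "open v" "k \<in> u" "a \<in> v" "u \<inter> v = {}"
      by (elim exE conjE)
    then have "u \<in> C" unfolding C_def by blast
    then show "k \<in> \<Union>C" using \<open>k \<in> u\<close> by (rule UnionI)
  qed
  moreover have "\<And>B. B \<in> C \<Longrightarrow> open B" by (simp add: C_def)
  ultimately obtain D where D: "D \<subseteq> C" "finite D" "K \<subseteq> \<Union>D"
    by (rule compactE[OF K])
  have "\<forall>u\<in>D. eventually (\<lambda>z. z \<notin> u) (nhds a)"
  proof
    fix u assume "u \<in> D"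
    with D(1) have "u \<in> C" by (rule subsetD)
    then obtain v where v: "open v" "a \<in> v" "u \<inter> v = {}" unfolding C_def by blast
    have "eventually (\<lambda>z. z \<in> v) (nhds a)" using v(1,2) by (rule eventually_nhds_in_open)
    then show "eventually (\<lambda>z. z \<notin> u) (nhds a)"
      by (rule eventually_mono) (use v(3) in blast)
  qed
  with D(2) have ev: "eventually (\<lambda>z. z \<notin> \<Union>D) (nhds a)"
    by (simp add: eventually_ball_finite)
  obtain Oa where Oa: "open Oa" "a \<in> Oa" "\<And>z. z \<in> Oa \<Longrightarrow> z \<notin> \<Union>D"
    using ev unfolding eventually_nhds by (elim exE conjE) (rule that, auto)
  have oD: "open (\<Union>D)" using D(1) by (intro open_Union) (auto simp: C_def)
  have "Oa \<inter> \<Union>D = {}" using Oa(3) by blast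
  then show ?thesis using Oa(1,2) oD D(3) by blast
qed

lemma ex_ultrafilter_le:
  fixes F :: "'a filter"
  assumes F: "F \<noteq> bot"
  shows "\<exists>U\<le>F. is_ultrafilter U"
proof -
  let ?X = "{G. G \<noteq> bot \<and> G \<le> F}"
  let ?R = "{(b, a). a \<noteq> bot \<and> a \<le> b \<and> b \<le> F}"
  have bot_notin_R: "c \<in> Chains ?R \<Longrightarrow> bot \<notin> c" for c
    by (auto simp: Chains_def)
  have [simp]: "Field ?R = ?X"
    by (auto simp: Field_def bot_unique)
  have "\<exists>m\<in>Field ?R. \<forall>a\<in>Field ?R. (m, a) \<in> ?R \<longrightarrow> a = m"
  proof (rule Zorns_po_lemma)
    show "Partial_order ?R"
      by (auto simp: partial_order_on_def preorder_on_def
          antisym_def refl_on_def trans_def Field_def bot_unique)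
    show "\<exists>u\<in>Field ?R. \<forall>a\<in>C. (a, u) \<in> ?R" if C: "C \<in> Chains ?R" for C
    proof (simp, intro exI conjI ballI)
      have Inf_C: "Inf C \<noteq> bot" "Inf C \<le> F" if "C \<noteq> {}"
      proof -
        from C that have "Inf C = bot \<longleftrightarrow> (\<exists>x\<in>C. x = bot)"
          unfolding trivial_limit_def by (intro eventually_Inf_base) (auto simp: Chains_def)
        with C show "Inf C \<noteq> bot"
          by (simp add: bot_notin_R)
        from that obtain x where "x \<in> C" by auto
        with C show "Inf C \<le> F"
          by (auto intro!: Inf_lower2[of x] simp: Chains_def)
      qed
      then have [simp]: "inf F (Inf C) = (if C = {} then F else Inf C)"
        using C by (auto simp add: inf_absorb2)
      from C show "inf F (Inf C) \<noteq> bot"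
        by (simp add: F Inf_C)
      from C show "inf F (Inf C) \<le> F"
        by (simp add: Chains_def Inf_C F)
      with C show "inf F (Inf C) \<le> x" "x \<le> F" if "x \<in> C" for x
        using that by (auto intro: Inf_lower simp: Chains_def)
    qed
  qed
  then obtain U where U: "U \<noteq> bot" "U \<le> F" and
    max: "\<And>G. G \<noteq> bot \<Longrightarrow> G \<le> U \<Longrightarrow> G = U"
    by auto
  have "eventually P U \<or> eventually (\<lambda>x. x \<notin> {x. P x}) U" for P
  proof (rule disjCI)
    assume "\<not> eventually (\<lambda>x. x \<notin> {x. P x}) U"
    then have "inf U (principal {x. P x}) \<noteq> bot"
      by (simp add: trivial_limit_def eventually_inf_principal)
    then have "inf U (principal {x. P x}) = U"
      by (rule max) simp
    then have UU: "U = inf U (principal {x. P x})" by simp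
    show "eventually P U"
      by (subst UU) (simp add: eventually_inf_principal)
  qed
  then have "is_ultrafilter U"
    unfolding is_ultrafilter_def using U(1) by auto
  with U(2) show ?thesis by blast
qed

lemma ultra_tendsto_Lim:
  fixes f :: "'a \<Rightarrow> 'b::t2_space"
  assumes cpt: "compact (UNIV :: 'b set)" and p: "is_ultrafilter p"
  shows "(f \<longlongrightarrow> Lim p f) p"
proof -
  have pb: "p \<noteq> bot" using p unfolding is_ultrafilter_def by auto
  have "filtermap f p \<noteq> bot" using pb by (simp add: filtermap_bot_iff)
  then obtain z where z: "inf (nhds z) (filtermap f p) \<noteq> bot"
    using cpt unfolding compact_filter by auto
  have "(f \<longlongrightarrow> z) p"
  proof (rule topological_tendstoI)
    fix W assume W: "open W" "z \<in> W"
    show "eventually (\<lambda>s. f s \<in> W) p"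
    proof (rule ccontr)
      assume "\<not> eventually (\<lambda>s. f s \<in> W) p"
      moreover have "eventually (\<lambda>s. s \<in> {s. f s \<in> W}) p \<or> eventually (\<lambda>s. s \<notin> {s. f s \<in> W}) p"
        using p unfolding is_ultrafilter_def by blast
      ultimately have "eventually (\<lambda>s. f s \<notin> W) p" by simp
      then have e1: "eventually (\<lambda>w. w \<notin> W) (filtermap f p)"
        by (simp add: eventually_filtermap)
      have e2: "eventually (\<lambda>w. w \<in> W) (nhds z)"
        using W eventually_nhds by blast
      have "eventually (\<lambda>w. False) (inf (nhds z) (filtermap f p))"
        unfolding eventually_inf using e1 e2 by blast
      with z show False by (simp add: eventually_False)
    qed
  qed
  with pb show ?thesis by (simp add: tendsto_Lim)
qed

theorem lemma10:
  fixes F :: "'a::semigroup_mult filter"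
    and T :: "'a \<Rightarrow> 'b::t2_space \<Rightarrow> 'b"
    and x y :: 'b
  assumes "F \<noteq> bot"
    and "\<forall>p\<in>filter_closure F. \<forall>q\<in>filter_closure F. beta_mult p q \<in> filter_closure F"
    and "dynamical_system T"
  shows "F_proximal F T x y \<longleftrightarrow> (\<exists>p\<in>filter_closure F. T_beta T p x = T_beta T p y)"
proof -
  have cpt: "compact (UNIV :: 'b set)" using assms(3) unfolding dynamical_system_def by auto
  let ?f = "\<lambda>s. (T s x, T s y)"
  have pair_lim: "(?f \<longlongrightarrow> (T_beta T p x, T_beta T p y)) p" if "is_ultrafilter p" for p
    unfolding T_beta_def
    by (intro tendsto_Pair ultra_tendsto_Lim[OF cpt that])
  show ?thesis
  proof
    assume prox: "F_proximal F T x y"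
    define G where "G = Abs_filter (\<lambda>P. \<exists>V. open V \<and> (\<forall>z. (z, z) \<in> V) \<and>
        eventually (\<lambda>s. ?f s \<in> V \<longrightarrow> P s) F)"
    have isf: "is_filter (\<lambda>P. \<exists>V. open V \<and> (\<forall>z. (z, z) \<in> V) \<and>
        eventually (\<lambda>s. ?f s \<in> V \<longrightarrow> P s) F)"
    proof
      show "\<exists>V. open V \<and> (\<forall>z. (z, z) \<in> V) \<and> eventually (\<lambda>s. ?f s \<in> V \<longrightarrow> True) F"
        by (intro exI[of _ UNIV]) auto
    next
      fix P Q
      assume "\<exists>V. open V \<and> (\<forall>z. (z, z) \<in> V) \<and> eventually (\<lambda>s. ?f s \<in> V \<longrightarrow> P s) F"
        "\<exists>V. open V \<and> (\<forall>z. (z, z) \<in> V) \<and> eventually (\<lambda>s. ?f s \<in> V \<longrightarrow> Q s) F"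
      then obtain V1 V2 where V: "open V1" "\<forall>z. (z, z) \<in> V1" "eventually (\<lambda>s. ?f s \<in> V1 \<longrightarrow> P s) F"
        "open V2" "\<forall>z. (z, z) \<in> V2" "eventually (\<lambda>s. ?f s \<in> V2 \<longrightarrow> Q s) F" by blast
      have "eventually (\<lambda>s. ?f s \<in> V1 \<inter> V2 \<longrightarrow> P s \<and> Q s) F"
        using V(3,6) by eventually_elim auto
      then show "\<exists>V. open V \<and> (\<forall>z. (z, z) \<in> V) \<and> eventually (\<lambda>s. ?f s \<in> V \<longrightarrow> P s \<and> Q s) F"
        using V by (intro exI[of _ "V1 \<inter> V2"]) auto
    next
      fix P Q :: "'a \<Rightarrow> bool"
      assume PQ: "\<forall>x. P x \<longrightarrow> Q x"
        and "\<exists>V. open V \<and> (\<forall>z. (z, z) \<in> V) \<and> eventually (\<lambda>s. ?f s \<in> V \<longrightarrow> P s) F"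
      then obtain V where V: "open V" "\<forall>z. (z, z) \<in> V" "eventually (\<lambda>s. ?f s \<in> V \<longrightarrow> P s) F"
        by blast
      have "eventually (\<lambda>s. ?f s \<in> V \<longrightarrow> Q s) F"
        using V(3) PQ by (auto elim: eventually_mono)
      then show "\<exists>V. open V \<and> (\<forall>z. (z, z) \<in> V) \<and> eventually (\<lambda>s. ?f s \<in> V \<longrightarrow> Q s) F"
        using V by blast
    qed
    have evG: "eventually P G \<longleftrightarrow> (\<exists>V. open V \<and> (\<forall>z. (z, z) \<in> V) \<and>
        eventually (\<lambda>s. ?f s \<in> V \<longrightarrow> P s) F)" for P
      unfolding G_def using isf by (simp add: eventually_Abs_filter)
    have GF: "G \<le> F"
      unfolding le_filter_def evG
      by (auto intro!: exI[of _ UNIV] elim: eventually_mono)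
    have Gb: "G \<noteq> bot"
    proof
      assume "G = bot"
      then have "eventually (\<lambda>s. False) G" by simp
      then obtain V where V: "open V" "\<forall>z. (z, z) \<in> V" "eventually (\<lambda>s. ?f s \<in> V \<longrightarrow> False) F"
        unfolding evG by blast
      have "eventually (\<lambda>s. s \<in> {s. ?f s \<notin> V}) F" using V(3) by simp
      with prox V(1,2) have "\<exists>s\<in>{s. ?f s \<notin> V}. ?f s \<in> V"
        unfolding F_proximal_def by blast
      then show False by blast
    qed
    have evV: "eventually (\<lambda>s. ?f s \<in> V) G" if "open V" "\<forall>z. (z, z) \<in> V" for V
      unfolding evG using that by (intro exI[of _ V]) auto
    obtain p where p: "p \<le> G" "is_ultrafilter p"
      using ex_ultrafilter_le[OF Gb] by blast
    have pb: "p \<noteq> bot" using p(2) unfolding is_ultrafilter_def by auto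
    have pc: "p \<in> filter_closure F"
      unfolding filter_closure_def using p GF by auto
    have "T_beta T p x = T_beta T p y"
    proof (rule ccontr)
      assume ne: "T_beta T p x \<noteq> T_beta T p y"
      let ?D = "range (\<lambda>z::'b. (z, z))"
      have cD: "compact ?D"
        by (intro compact_continuous_image cpt continuous_intros)
      have nD: "(T_beta T p x, T_beta T p y) \<notin> ?D" using ne by auto
      obtain Oa P where OP: "open Oa" "open P" "(T_beta T p x, T_beta T p y) \<in> Oa"
        "?D \<subseteq> P" "Oa \<inter> P = {}"
        using sep_point_compact[OF cD nD] by (elim exE conjE)
      have e1: "eventually (\<lambda>s. ?f s \<in> Oa) p"
        using pair_lim[OF p(2)] OP(1,3) by (rule topological_tendstoD)
      have e2: "eventually (\<lambda>s. ?f s \<in> P) p"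
      proof -
        have "\<forall>z. (z, z) \<in> P" using OP(4) by auto
        then show ?thesis using filter_leD[OF p(1) evV[OF OP(2)]] by blast
      qed
      have "eventually (\<lambda>s. False) p"
        using e1 e2 by eventually_elim (use OP(5) in auto)
      with pb show False by (simp add: eventually_False)
    qed
    with pc show "\<exists>p\<in>filter_closure F. T_beta T p x = T_beta T p y" by blast
  next
    assume "\<exists>p\<in>filter_closure F. T_beta T p x = T_beta T p y"
    then obtain p where pc: "p \<in> filter_closure F" and eq: "T_beta T p x = T_beta T p y" by blast
    have pu: "is_ultrafilter p" and pF: "p \<le> F" using pc unfolding filter_closure_def by auto
    have pb: "p \<noteq> bot" using pu unfolding is_ultrafilter_def by auto
    show "F_proximal F T x y"
      unfolding F_proximal_def
    proof (intro allI impI)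
      fix U :: "('b \<times> 'b) set" and A :: "'a set"
      assume "\<exists>V. open V \<and> (\<forall>z. (z, z) \<in> V) \<and> V \<subseteq> U"
      then obtain V where V: "open V" "\<forall>z. (z, z) \<in> V" "V \<subseteq> U" by blast
      assume A: "eventually (\<lambda>s. s \<in> A) F"
      have e1: "eventually (\<lambda>s. ?f s \<in> V) p"
      proof -
        have "(T_beta T p x, T_beta T p y) \<in> V" using V(2) eq by simp
        with pair_lim[OF pu] V(1) show ?thesis by (rule topological_tendstoD)
      qed
      have e2: "eventually (\<lambda>s. s \<in> A) p" using filter_leD[OF pF A] .
      show "\<exists>s\<in>A. ?f s \<in> U"
      proof (rule ccontr)
        assume nex: "\<not> (\<exists>s\<in>A. ?f s \<in> U)"
        have "eventually (\<lambda>s. False) p"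
          using e1 e2 by eventually_elim (use V(3) nex in auto)
        with pb show False by (simp add: eventually_False)
      qed
    qed
  qed
qed

end
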